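(* For any $L\in\mathbb{N}$ there exists a ReLU network $\phi:\mathbb{R}^2\to\mathbb{R}$, $\phi\in\mathcal{NN}(8,2L)$, such that $\phi(x,l)=x_l$ whenever $x=\sum_{j=1}^Lx_j2^{-j}$ with $x_j\in\{0,1\}$ and $l\in\{1,2,\dots,L\}$. Furthermore, $|\phi(x,l)-\phi(x',l')|\le2\cdot2^{L^2}|x-x'|+L|l-l'|$ for all $x,x',l,l'\in\mathbb{R}$.
   Context: $\sigma(x)=\max(x,0)$. $\mathcal{NN}(W,L)$: functions $\phi(x)=T_L(\sigma(T_{L-1}(\cdots\sigma(T_0(x))\cdots)))$ with affine maps $T_l$, ReLU componentwise, all hidden layer sizes $\le W$ and depth $\le L$. *)

theory Defs
  imports Complex_Main
begin

text \<open>Vectors in R^n are represented as functions nat => real, only the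
coordinates i < n being relevant. An affine layer is a triple (m, A, b):
output dimension m, weight matrix A (entries A i j, i < m, j < n), bias b.\<close>

type_synonym layer = "nat \<times> (nat \<Rightarrow> nat \<Rightarrow> real) \<times> (nat \<Rightarrow> real)"

definition affine :: "nat \<Rightarrow> layer \<Rightarrow> (nat \<Rightarrow> real) \<Rightarrow> (nat \<Rightarrow> real)" where
  "affine n T x = (case T of (m, A, b) \<Rightarrow>
     (\<lambda>i. if i < m then (\<Sum>j<n. A i j * x j) + b i else 0))"

definition relu :: "real \<Rightarrow> real" where
  "relu t = max t 0"

fun realize :: "nat \<Rightarrow> layer list \<Rightarrow> (nat \<Rightarrow> real) \<Rightarrow> (nat \<Rightarrow> real)" where
  "realize n [] x = x"
| "realize n [T] x = affine n T x"
| "realize n (T # T' # Ts) x = realize (fst T) (T' # Ts) (\<lambda>i. relu (affine n T x i))"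

text \<open>NN d_in d_out W L: functions R^{d_in} -> R^{d_out} realized by ReLU networks
 with affine maps T_0,...,T_k, k <= L (depth <= L), all hidden layer sizes <= W.\<close>
definition NN :: "nat \<Rightarrow> nat \<Rightarrow> nat \<Rightarrow> nat \<Rightarrow> ((nat \<Rightarrow> real) \<Rightarrow> (nat \<Rightarrow> real)) set" where
  "NN d_in d_out W L = {\<phi>. \<exists>Ts. Ts \<noteq> [] \<and> length Ts \<le> L + 1
      \<and> (\<forall>T\<in>set (butlast Ts). fst T \<le> W) \<and> fst (last Ts) = d_out
      \<and> \<phi> = realize d_in Ts}"

definition vec2 :: "real \<Rightarrow> real \<Rightarrow> (nat \<Rightarrow> real)" where
  "vec2 a c = (\<lambda>i. if i = 0 then a else if i = 1 then c else 0)"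

end

theory Submission
  imports Defs
begin

definition cc :: "nat \<Rightarrow> real" where "cc j = (1/2)^(Suc j)"

definition layP :: "nat \<Rightarrow> nat \<Rightarrow> layer" where
"layP L j = (8, (\<lambda>i k. if i = 0 \<and> k = 0 then 1 else if (i = 1 \<or> i = 2) \<and> k = 0 then 2^L
    else if (i = 3 \<or> i = 4 \<or> i = 5 \<or> i = 6) \<and> k = 1 then 1
    else if i = 7 \<and> (k = 2 \<or> k = 3) then 1 else 0),
  (\<lambda>i. if i = 1 then 1 - 2^L * cc j else if i = 2 then - (2^L * cc j)
    else if i = 3 then - real j else if i = 4 then - real j - 1
    else if i = 5 then - real j - 2 else 0))"

definition layQ :: "nat \<Rightarrow> layer" where
"layQ j = (4, (\<lambda>i k. if i = 0 then (if k = 0 then 1 else if k = 1 then - cc j else if k = 2 then cc j else 0)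
   else if i = 1 then (if k = 6 then 1 else 0)
   else if i = 2 then (if k = 7 then 1 else 0)
   else if i = 3 then (if k = 1 \<or> k = 3 \<or> k = 5 then 1 else if k = 2 then -1 else if k = 4 then -2 else 0)
   else 0), (\<lambda>i. if i = 3 then -1 else 0))"

definition layO :: layer where
"layO = (1, (\<lambda>i k. if k = 2 \<or> k = 3 then 1 else 0), (\<lambda>i. 0))"

definition stg :: "nat \<Rightarrow> nat \<Rightarrow> (nat \<Rightarrow> real) \<Rightarrow> (nat \<Rightarrow> real)" where
"stg L j s = (\<lambda>i. relu (affine 8 (layQ j) (\<lambda>k. relu (affine 4 (layP L j) s k)) i))"

fun sem :: "nat \<Rightarrow> nat \<Rightarrow> nat \<Rightarrow> (nat \<Rightarrow> real) \<Rightarrow> (nat \<Rightarrow> real)" where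
"sem L j 0 s = s" | "sem L j (Suc k) s = sem L (Suc j) k (stg L j s)"

fun blocks :: "nat \<Rightarrow> nat \<Rightarrow> nat \<Rightarrow> layer list" where
"blocks L j 0 = [layO]" | "blocks L j (Suc k) = layP L j # layQ j # blocks L (Suc j) k"

lemma blocks_ne: "\<exists>b bs. blocks L j k = b # bs"
proof (cases k)
  case 0 show ?thesis unfolding 0 blocks.simps by blast
next
  case (Suc m) show ?thesis unfolding Suc blocks.simps by blast
qed

lemma realize_blocks: "realize 4 (blocks L j k) s = affine 4 layO (sem L j k s)"
proof (induction k arbitrary: j s)
  case 0 then show ?case by simp
next
  case (Suc k)
  obtain b bs where bb: "blocks L (Suc j) k = b # bs" using blocks_ne by blast
  have "realize 4 (blocks L j (Suc k)) s = realize 4 (blocks L (Suc j) k) (stg L j s)"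
    by (simp add: bb stg_def layP_def layQ_def)
  then show ?case using Suc by simp
qed

lemma aff24: "v 2 = 0 \<Longrightarrow> v 3 = 0 \<Longrightarrow> affine 2 T v = affine 4 T v"
proof -
  assume v: "v 2 = 0" "v 3 = 0"
  have e: "{..<4::nat} = {0,1,2,3}" "{..<2::nat} = {0,1}" by auto
  have "\<And>f::nat\<Rightarrow>real. (\<Sum>j<4. f j * v j) = (\<Sum>j<2. f j * v j)"
    unfolding e using v by simp
  note h = this
  obtain m A b where T: "T = (m, A, b)" by (cases T)
  show ?thesis unfolding T affine_def
    apply (rule ext) apply (simp only: h) done
qed

lemma realize_main: "v 2 = 0 \<Longrightarrow> v 3 = 0 \<Longrightarrow> realize 2 (blocks L 0 L) v = affine 4 layO (sem L 0 L v)"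
proof (cases L)
  case 0
  assume "v 2 = 0" "v 3 = 0" then show ?thesis using 0 aff24 by simp
next
  case (Suc k)
  assume v: "v 2 = 0" "v 3 = 0"
  obtain b bs where bb: "blocks L (Suc 0) k = b # bs" using blocks_ne by blast
  have "realize 2 (blocks L 0 L) v = realize 4 (blocks L 0 L) v"
    using Suc bb aff24[OF v] by (simp add: layP_def layQ_def)
  then show ?thesis by (simp add: realize_blocks)
qed

lemma out_val: "affine 4 layO s 0 = s 2 + s 3"
  by (simp add: affine_def layO_def numeral_eq_Suc)

definition bitf :: "nat \<Rightarrow> nat \<Rightarrow> real \<Rightarrow> real" where
"bitf L j a = relu (2^L * (a - cc j) + 1) - relu (2^L * (a - cc j))"

definition hat :: "real \<Rightarrow> real" where
"hat t = relu t - 2 * relu (t - 1) + relu (t - 2)"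

lemma relu_nn: "relu t \<ge> 0" by (simp add: relu_def)
lemma relu_relu[simp]: "relu (relu t) = relu t" by (simp add: relu_def)

lemma stg0: "stg L j s 0 = relu (relu (s 0) - cc j * bitf L j (s 0))"
  by (simp add: stg_def affine_def layP_def layQ_def bitf_def numeral_eq_Suc algebra_simps)
lemma stg1: "stg L j s 1 = relu (s 1)"
  by (simp add: stg_def affine_def layP_def layQ_def numeral_eq_Suc)
lemma stg2: "stg L j s 2 = relu (s 2 + s 3)"
  by (simp add: stg_def affine_def layP_def layQ_def numeral_eq_Suc)
lemma stg3: "stg L j s 3 = relu (bitf L j (s 0) + hat (s 1 - real j) - 1)"
  by (simp add: stg_def affine_def layP_def layQ_def bitf_def hat_def numeral_eq_Suc algebra_simps)

lemma relu_lip: "\<bar>relu a - relu b\<bar> \<le> \<bar>a - b\<bar>"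
  by (simp add: relu_def max_def abs_if)

lemma clamp_lip: "\<bar>(relu (a+1) - relu a) - (relu (b+1) - relu b)\<bar> \<le> \<bar>a - b\<bar>"
  by (simp add: relu_def max_def abs_if)

lemma hat_lip: "\<bar>hat a - hat b\<bar> \<le> \<bar>a - b\<bar>"
  by (simp add: hat_def relu_def max_def abs_if)

lemma bitf_lip: "\<bar>bitf L j a - bitf L j b\<bar> \<le> 2^L * \<bar>a - b\<bar>"
proof -
  have "\<bar>bitf L j a - bitf L j b\<bar> \<le> \<bar>2^L * (a - cc j) - 2^L * (b - cc j)\<bar>"
    unfolding bitf_def by (rule clamp_lip)
  also have "2^L * (a - cc j) - 2^L * (b - cc j) = 2^L * (a - b)" by (simp add: algebra_simps)
  also have "\<bar>(2::real)^L * (a - b)\<bar> = 2^L * \<bar>a - b\<bar>" by (simp add: abs_mult)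
  finally show ?thesis .
qed

lemma cc_le: "cc j \<le> 1/2"
proof -
  have "(1/2::real)^(Suc j) \<le> (1/2)^1" by (rule power_decreasing) auto
  then show ?thesis by (simp add: cc_def)
qed

lemma cc_pos: "cc j > 0" by (simp add: cc_def)

definition RR :: "(nat \<Rightarrow> real) \<Rightarrow> nat \<Rightarrow> nat \<Rightarrow> real" where
"RR xs L j = (\<Sum>i=Suc j..L. xs i * (1/2)^i)"

lemma geo: "j \<le> L \<Longrightarrow> (\<Sum>i=Suc j..L. (1/2::real)^i) = (1/2)^j - (1/2)^L"
proof (induction L)
  case 0 then show ?case by simp
next
  case (Suc L)
  show ?case
  proof (cases "j = Suc L")
    case True then show ?thesis by simp
  next
    case False
    then have "j \<le> L" using Suc by simp
    then show ?thesis using Suc by (simp add: sum.cl_ivl_Suc)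
  qed
qed

lemma RR_bounds:
  assumes bits: "\<forall>i\<in>{1..L}. xs i \<in> {0,1}" and jL: "j \<le> L"
  shows "0 \<le> RR xs L j \<and> RR xs L j \<le> (1/2)^j - (1/2)^L"
proof
  have xi: "xs i \<in> {0,1}" if "i \<in> {Suc j..L}" for i using bits that by auto
  show "0 \<le> RR xs L j" unfolding RR_def
    by (rule sum_nonneg) (use xi in fastforce)
  have "RR xs L j \<le> (\<Sum>i=Suc j..L. (1/2::real)^i)" unfolding RR_def
    by (rule sum_mono) (use xi in fastforce)
  then show "RR xs L j \<le> (1/2)^j - (1/2)^L" using geo[OF jL] by simp
qed

lemma RR_step: "j < L \<Longrightarrow> RR xs L j = xs (Suc j) * cc j + RR xs L (Suc j)"
  unfolding RR_def cc_def by (simp add: sum.atLeast_Suc_atMost)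

lemma hat_int: "hat (real l - real j) = (if l = Suc j then 1 else 0)"
proof -
  consider "l \<le> j" | "l = Suc j" | "l \<ge> Suc (Suc j)" by linarith
  then show ?thesis
  proof cases
    case 1 then show ?thesis by (simp add: hat_def relu_def)
  next
    case 2 then show ?thesis by (simp add: hat_def relu_def)
  next
    case 3
    then have "real l - real j \<ge> 2" by simp
    then show ?thesis using 3 by (simp add: hat_def relu_def)
  qed
qed

lemma pow_half: "(2::real)^L * (1/2)^L = 1"
  by (simp add: power_mult_distrib[symmetric])

lemma step_ok:
  assumes bits: "\<forall>i\<in>{1..L}. xs i \<in> {0,1}" and l: "l \<in> {1..L}" and jL: "j < L"
    and s0: "s 0 = RR xs L j" and s1: "s 1 = real l"
    and s23: "s 2 + s 3 = (if l \<le> j then xs l else 0)"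
  shows "stg L j s 0 = RR xs L (Suc j) \<and> stg L j s 1 = real l
     \<and> stg L j s 2 + stg L j s 3 = (if l \<le> Suc j then xs l else 0)"
proof -
  define r where "r = RR xs L (Suc j)"
  have rb: "0 \<le> r" "r \<le> (1/2)^(Suc j) - (1/2)^L" using RR_bounds[OF bits, of "Suc j"] jL
    by (auto simp: r_def)
  have xb: "xs (Suc j) \<in> {0,1}" using bits jL by auto
  have R: "s 0 = xs (Suc j) * cc j + r" using RR_step[OF jL] s0 r_def by simp
  have b: "bitf L j (s 0) = xs (Suc j)"
  proof (cases "xs (Suc j) = 1")
    case True
    then have "s 0 - cc j = r" using R by simp
    then show ?thesis using True rb by (simp add: bitf_def relu_def)
  next
    case False
    then have x0: "xs (Suc j) = 0" using xb by auto
    then have "s 0 - cc j \<le> - ((1/2)^L)" using R rb by (simp add: cc_def)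
    then have "2^L * (s 0 - cc j) \<le> 2^L * (- ((1/2)^L))"
      by (rule mult_left_mono) simp
    then have "2^L * (s 0 - cc j) \<le> -1" using pow_half[of L] by simp
    then show ?thesis using x0 by (simp add: bitf_def relu_def)
  qed
  have "stg L j s 0 = r"
    unfolding stg0 b using R rb cc_pos[of j] xb by (auto simp: relu_def)
  moreover have "stg L j s 1 = real l" unfolding stg1 s1 by (simp add: relu_def)
  moreover have "stg L j s 2 + stg L j s 3 = (if l \<le> Suc j then xs l else 0)"
  proof -
    have xl: "xs l \<in> {0,1}" using bits l by auto
    have "stg L j s 2 = (if l \<le> j then xs l else 0)"
      unfolding stg2 s23 using xl by (auto simp: relu_def)
    moreover have "stg L j s 3 = (if l = Suc j then xs (Suc j) else 0)"
      unfolding stg3 b s1 hat_int using xb by (auto simp: relu_def)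
    ultimately show ?thesis by auto
  qed
  ultimately show ?thesis by (simp add: r_def)
qed

lemma sem_ok:
  assumes bits: "\<forall>i\<in>{1..L}. xs i \<in> {0,1}" and l: "l \<in> {1..L}"
  shows "j + k \<le> L \<Longrightarrow> s 0 = RR xs L j \<Longrightarrow> s 1 = real l \<Longrightarrow>
    s 2 + s 3 = (if l \<le> j then xs l else 0) \<Longrightarrow>
    sem L j k s 0 = RR xs L (j + k) \<and> sem L j k s 1 = real l \<and>
    sem L j k s 2 + sem L j k s 3 = (if l \<le> j + k then xs l else 0)"
proof (induction k arbitrary: j s)
  case 0 then show ?case by simp
next
  case (Suc k)
  have "j < L" using Suc.prems by simp
  from step_ok[OF bits l this Suc.prems(2-4)] have st:
    "stg L j s 0 = RR xs L (Suc j)" "stg L j s 1 = real l"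
    "stg L j s 2 + stg L j s 3 = (if l \<le> Suc j then xs l else 0)" by auto
  have "Suc j + k \<le> L" using Suc.prems by simp
  from Suc.IH[OF this st] show ?case by simp
qed

lemma step_lip:
  fixes q :: real
  assumes q: "q = 2^L" and jL: "j < L"
    and h0: "\<bar>s 0 - t 0\<bar> \<le> q^j * dx" and h1: "\<bar>s 1 - t 1\<bar> \<le> dl"
    and h2: "\<bar>(s 2 + s 3) - (t 2 + t 3)\<bar> \<le> (\<Sum>i=1..j. q^i) * dx + real j * dl"
  shows "\<bar>stg L j s 0 - stg L j t 0\<bar> \<le> q^(Suc j) * dx \<and> \<bar>stg L j s 1 - stg L j t 1\<bar> \<le> dl
    \<and> \<bar>(stg L j s 2 + stg L j s 3) - (stg L j t 2 + stg L j t 3)\<bar>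
        \<le> (\<Sum>i=1..Suc j. q^i) * dx + real (Suc j) * dl"
proof -
  define D where "D = \<bar>s 0 - t 0\<bar>"
  have "(2::real)^1 \<le> 2^L" by (rule power_increasing) (use jL in auto)
  then have q2: "q \<ge> 2" unfolding q by simp
  have bl: "\<bar>bitf L j (s 0) - bitf L j (t 0)\<bar> \<le> q * D" using bitf_lip q D_def by simp
  have D0: "D \<ge> 0" by (simp add: D_def)
  have "\<bar>stg L j s 0 - stg L j t 0\<bar> \<le>
     \<bar>(relu (s 0) - cc j * bitf L j (s 0)) - (relu (t 0) - cc j * bitf L j (t 0))\<bar>"
    unfolding stg0 by (rule relu_lip)
  also have "\<dots> \<le> \<bar>relu (s 0) - relu (t 0)\<bar> + cc j * \<bar>bitf L j (s 0) - bitf L j (t 0)\<bar>"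
  proof -
    have "(relu (s 0) - cc j * bitf L j (s 0)) - (relu (t 0) - cc j * bitf L j (t 0))
       = (relu (s 0) - relu (t 0)) - cc j * (bitf L j (s 0) - bitf L j (t 0))" by (simp add: algebra_simps)
    then have "\<bar>(relu (s 0) - cc j * bitf L j (s 0)) - (relu (t 0) - cc j * bitf L j (t 0))\<bar>
       = \<bar>(relu (s 0) - relu (t 0)) - cc j * (bitf L j (s 0) - bitf L j (t 0))\<bar>" by simp
    also have "\<dots> \<le> \<bar>relu (s 0) - relu (t 0)\<bar> + \<bar>cc j * (bitf L j (s 0) - bitf L j (t 0))\<bar>"
      by (rule abs_triangle_ineq4)
    also have "\<bar>cc j * (bitf L j (s 0) - bitf L j (t 0))\<bar> = cc j * \<bar>bitf L j (s 0) - bitf L j (t 0)\<bar>"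
      using cc_pos[of j] by (simp add: abs_mult)
    finally show ?thesis .
  qed
  also have "\<dots> \<le> D + cc j * (q * D)"
    using relu_lip[of "s 0" "t 0"] bl cc_pos[of j] D_def
    by (intro add_mono mult_left_mono) auto
  also have "\<dots> \<le> D + (1/2) * (q * D)"
    using cc_le[of j] q2 D0 by (intro add_mono mult_right_mono) auto
  also have "\<dots> \<le> q * D"
  proof -
    have "0 \<le> (q - 2) * D" using q2 D0 by simp
    then have "0 \<le> q * D - 2 * D" by (simp add: algebra_simps)
    then show ?thesis by linarith
  qed
  also have "\<dots> \<le> q * (q^j * dx)" using h0 q2 D_def by (intro mult_left_mono) auto
  finally have c0: "\<bar>stg L j s 0 - stg L j t 0\<bar> \<le> q^(Suc j) * dx" by (simp add: mult.assoc)
  have c1: "\<bar>stg L j s 1 - stg L j t 1\<bar> \<le> dl" unfolding stg1 using relu_lip[of "s 1" "t 1"] h1 by simp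
  have "\<bar>(stg L j s 2 + stg L j s 3) - (stg L j t 2 + stg L j t 3)\<bar>
     \<le> \<bar>stg L j s 2 - stg L j t 2\<bar> + \<bar>stg L j s 3 - stg L j t 3\<bar>" by simp
  also have "\<dots> \<le> \<bar>(s 2 + s 3) - (t 2 + t 3)\<bar> +
      (\<bar>bitf L j (s 0) - bitf L j (t 0)\<bar> + \<bar>hat (s 1 - real j) - hat (t 1 - real j)\<bar>)"
  proof (rule add_mono)
    show "\<bar>stg L j s 2 - stg L j t 2\<bar> \<le> \<bar>(s 2 + s 3) - (t 2 + t 3)\<bar>"
      unfolding stg2 by (rule relu_lip)
    have "\<bar>stg L j s 3 - stg L j t 3\<bar> \<le> \<bar>(bitf L j (s 0) + hat (s 1 - real j) - 1) - (bitf L j (t 0) + hat (t 1 - real j) - 1)\<bar>"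
      unfolding stg3 by (rule relu_lip)
    then show "\<bar>stg L j s 3 - stg L j t 3\<bar> \<le>
      \<bar>bitf L j (s 0) - bitf L j (t 0)\<bar> + \<bar>hat (s 1 - real j) - hat (t 1 - real j)\<bar>" by linarith
  qed
  also have "\<dots> \<le> ((\<Sum>i=1..j. q^i) * dx + real j * dl) + (q * (q^j * dx) + dl)"
  proof (intro add_mono h2)
    have "q * D \<le> q * (q^j * dx)" using h0 q2 D_def by (intro mult_left_mono) auto
    then show "\<bar>bitf L j (s 0) - bitf L j (t 0)\<bar> \<le> q * (q^j * dx)" using bl by linarith
    show "\<bar>hat (s 1 - real j) - hat (t 1 - real j)\<bar> \<le> dl"
      using hat_lip[of "s 1 - real j" "t 1 - real j"] h1 by simp
  qed
  also have "\<dots> = (\<Sum>i=1..Suc j. q^i) * dx + real (Suc j) * dl"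
    by (simp add: algebra_simps)
  finally show ?thesis using c0 c1 by blast
qed

lemma sem_lip:
  fixes q :: real
  assumes q: "q = 2^L"
  shows "j + k \<le> L \<Longrightarrow> \<bar>s 0 - t 0\<bar> \<le> q^j * dx \<Longrightarrow> \<bar>s 1 - t 1\<bar> \<le> dl \<Longrightarrow>
    \<bar>(s 2 + s 3) - (t 2 + t 3)\<bar> \<le> (\<Sum>i=1..j. q^i) * dx + real j * dl \<Longrightarrow>
    \<bar>(sem L j k s 2 + sem L j k s 3) - (sem L j k t 2 + sem L j k t 3)\<bar>
      \<le> (\<Sum>i=1..j+k. q^i) * dx + real (j+k) * dl"
proof (induction k arbitrary: j s t)
  case 0 then show ?case by simp
next
  case (Suc k)
  have "j < L" using Suc.prems by simp
  from step_lip[OF q this Suc.prems(2-4)] have st: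
    "\<bar>stg L j s 0 - stg L j t 0\<bar> \<le> q^(Suc j) * dx" "\<bar>stg L j s 1 - stg L j t 1\<bar> \<le> dl"
    "\<bar>(stg L j s 2 + stg L j s 3) - (stg L j t 2 + stg L j t 3)\<bar>
        \<le> (\<Sum>i=1..Suc j. q^i) * dx + real (Suc j) * dl" by auto
  have "Suc j + k \<le> L" using Suc.prems by simp
  from Suc.IH[OF this st] show ?case by simp
qed

lemma geo2: "(q::real) \<ge> 2 \<Longrightarrow> (\<Sum>i=1..k. q^i) \<le> 2 * q^k"
proof (induction k)
  case 0 then show ?case by simp
next
  case (Suc k)
  have "2 * q^k \<le> q * q^k" using Suc.prems by (intro mult_right_mono) auto
  moreover have "(\<Sum>i=1..Suc k. q^i) = (\<Sum>i=1..k. q^i) + q*q^k" by (simp add: sum.cl_ivl_Suc)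
  ultimately show ?case using Suc unfolding power_Suc by linarith
qed

lemma blocks_nonnil: "blocks L j k \<noteq> []" using blocks_ne by (metis list.distinct(1))

lemma blocks_len: "length (blocks L j k) = 2 * k + 1"
  by (induction k arbitrary: j) auto

lemma blocks_fst: "\<forall>T\<in>set (blocks L j k). fst T \<le> 8"
  by (induction k arbitrary: j) (auto simp: layP_def layQ_def layO_def)

lemma blocks_last: "last (blocks L j k) = layO"
  by (induction k arbitrary: j) (auto simp: blocks_nonnil)

lemma ev: "realize 2 (blocks L 0 L) (vec2 a c) 0 = sem L 0 L (vec2 a c) 2 + sem L 0 L (vec2 a c) 3"
  using realize_main[of "vec2 a c" L] out_val by (simp add: vec2_def)

theorem lemma29:
  fixes L :: nat
  shows "\<exists>\<phi>\<in>NN 2 1 8 (2 * L).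
    (\<forall>(xs :: nat \<Rightarrow> real) (l :: nat).
       (\<forall>j\<in>{1..L}. xs j \<in> {0, 1}) \<longrightarrow> l \<in> {1..L} \<longrightarrow>
       \<phi> (vec2 (\<Sum>j=1..L. xs j * (1/2) ^ j) (real l)) 0 = xs l)
  \<and> (\<forall>x x' l l' :: real.
       \<bar>\<phi> (vec2 x l) 0 - \<phi> (vec2 x' l') 0\<bar>
         \<le> 2 * 2 ^ (L ^ 2) * \<bar>x - x'\<bar> + real L * \<bar>l - l'\<bar>)"
proof (rule bexI[of _ "realize 2 (blocks L 0 L)"], intro conjI allI impI)
  show "realize 2 (blocks L 0 L) \<in> NN 2 1 8 (2 * L)"
    unfolding NN_def
  proof (intro CollectI exI[of _ "blocks L 0 L"] conjI)
    show "\<forall>T\<in>set (butlast (blocks L 0 L)). fst T \<le> 8"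
      using blocks_fst[of L 0 L] by (meson in_set_butlastD)
  qed (auto simp: blocks_nonnil blocks_len blocks_last layO_def)
  fix xs :: "nat \<Rightarrow> real" and l :: nat
  assume bits: "\<forall>j\<in>{1..L}. xs j \<in> {0, 1}" and l: "l \<in> {1..L}"
  define v where "v = vec2 (\<Sum>j=1..L. xs j * (1/2) ^ j) (real l)"
  have "v 0 = RR xs L 0" by (simp add: v_def vec2_def RR_def)
  moreover have "v 1 = real l" by (simp add: v_def vec2_def)
  moreover have "v 2 + v 3 = (if l \<le> 0 then xs l else 0)" using l by (simp add: v_def vec2_def)
  ultimately have "sem L 0 L v 2 + sem L 0 L v 3 = (if l \<le> 0 + L then xs l else 0)"
    using sem_ok[OF bits l, of 0 L v] by simp
  then show "realize 2 (blocks L 0 L) (vec2 (\<Sum>j=1..L. xs j * (1/2) ^ j) (real l)) 0 = xs l"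
    using ev l v_def by simp
next
  fix x x' l l' :: real
  define q :: real where "q = 2^L"
  have "\<bar>(sem L 0 L (vec2 x l) 2 + sem L 0 L (vec2 x l) 3) - (sem L 0 L (vec2 x' l') 2 + sem L 0 L (vec2 x' l') 3)\<bar>
      \<le> (\<Sum>i=1..0+L. q^i) * \<bar>x - x'\<bar> + real (0+L) * \<bar>l - l'\<bar>"
    by (rule sem_lip[OF q_def]) (auto simp: vec2_def)
  also have "(\<Sum>i=1..0+L. q^i) * \<bar>x - x'\<bar> \<le> (2 * q^L) * \<bar>x - x'\<bar>"
  proof (intro mult_right_mono)
    show "(\<Sum>i=1..0+L. q^i) \<le> 2 * q^L"
    proof (cases "L = 0")
      case True then show ?thesis by (simp add: q_def)
    next
      case False
      have "(2::real)^1 \<le> 2^L" by (rule power_increasing) (use False in auto)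
      then have "q \<ge> 2" by (simp add: q_def)
      then show ?thesis using geo2[of q L] by simp
    qed
  qed simp
  also have "q^L = 2^(L^2)" by (simp add: q_def power2_eq_square power_mult)
  finally show "\<bar>realize 2 (blocks L 0 L) (vec2 x l) 0 - realize 2 (blocks L 0 L) (vec2 x' l') 0\<bar>
         \<le> 2 * 2 ^ (L ^ 2) * \<bar>x - x'\<bar> + real L * \<bar>l - l'\<bar>" using ev by simp
qed

end
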